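(* For all integers $k\ge1$ and $n\ge0$, \[ nov_k(n) = \frac{k}{2}\,\overline{M[k]}_2(n). \]
   Context: An overpartition of $n$ is a non-increasing sequence of positive integers summing to $n$ in which the first occurrence of each integer may be overlined. $nov_k(n)$ denotes the sum of all non-overlined parts divisible by $k$, summed over all overpartitions of $n$. With $(a_1,\dots,a_r;q)_\infty = \prod_{i\ge0}(1-a_1q^i)\cdots(1-a_rq^i)$, $\overline{P}(q) = \frac{(-q;q)_\infty}{(q;q)_\infty}$ and $C(z;q) = \frac{(q;q)_\infty}{(zq,q/z;q)_\infty}$, define $\overline{M[k]}(m,n)$ by $(q^k;q^k)_\infty\,\overline{P}(q)\,C(z;q^k) = \sum_{n\ge0}\sum_{m\in\mathbb{Z}}\overline{M[k]}(m,n)z^mq^n$, and $\overline{M[k]}_2(n) = \sum_{m\in\mathbb{Z}} m^2\,\overline{M[k]}(m,n)$. *)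

theory Defs
  imports "HOL-Analysis.Analysis" "HOL-Computational_Algebra.Formal_Laurent_Series"
begin

text \<open>An overpartition is a non-increasing list of positive parts, each part tagged with a
  flag (True = overlined); only the first occurrence of a given part value may be overlined.\<close>

definition is_overpartition :: "nat \<Rightarrow> (nat \<times> bool) list \<Rightarrow> bool" where
  "is_overpartition n xs \<longleftrightarrow>
     (\<forall>p\<in>set xs. 0 < fst p) \<and>
     sorted_wrt (\<lambda>a b. a \<ge> b) (map fst xs) \<and>
     sum_list (map fst xs) = n \<and>
     (\<forall>i<length xs. snd (xs ! i) \<longrightarrow> (\<forall>j<i. fst (xs ! j) \<noteq> fst (xs ! i)))"

definition nov :: "nat \<Rightarrow> nat \<Rightarrow> nat" where
  "nov k n = (\<Sum>xs\<in>{xs. is_overpartition n xs}.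
               \<Sum>p\<leftarrow>xs. if \<not> snd p \<and> k dvd fst p then fst p else 0)"

text \<open>Formal power series in q whose coefficients are formal Laurent series in z.\<close>

type_synonym ser = "real fls fps"

definition qv :: ser where "qv = fps_X"
definition zv :: ser where "zv = fps_const fls_X"
definition zinv :: ser where "zinv = fps_const fls_X_inv"

text \<open>(a;b)_\<infinity> = \<Prod>_{i\<ge>0} (1 - a b^i), as an infinite product in the fps topology.\<close>

definition qpoch :: "ser \<Rightarrow> ser \<Rightarrow> ser" where
  "qpoch a b = (\<Prod>i. 1 - a * b ^ i)"

definition Pbar :: ser where
  "Pbar = qpoch (- qv) qv / qpoch qv qv"

definition Cz :: "nat \<Rightarrow> ser" where
  "Cz k = qpoch (qv ^ k) (qv ^ k) /
          (qpoch (zv * qv ^ k) (qv ^ k) * qpoch (qv ^ k * zinv) (qv ^ k))"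

definition GF :: "nat \<Rightarrow> ser" where
  "GF k = qpoch (qv ^ k) (qv ^ k) * Pbar * Cz k"

definition Mbar :: "nat \<Rightarrow> int \<Rightarrow> nat \<Rightarrow> real" where
  "Mbar k m n = fls_nth (fps_nth (GF k) n) m"

definition Mbar2 :: "nat \<Rightarrow> nat \<Rightarrow> real" where
  "Mbar2 k n = (\<Sum>\<^sub>\<infinity>m\<in>(UNIV::int set). (of_int m)^2 * Mbar k m n)"

end

theory Submission
  imports Defs
begin

unbundle fps_syntax

fun ovl :: "(nat \<times> bool) list \<Rightarrow> bool" where
  "ovl [] = True"
| "ovl (p # ys) = (0 < fst p \<and> (\<forall>q\<in>set ys. fst q \<le> fst p \<and> (snd q \<longrightarrow> fst q \<noteq> fst p)) \<and> ovl ys)"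

definition icond :: "(nat \<times> bool) list \<Rightarrow> bool" where
  "icond xs = (\<forall>i<length xs. snd (xs ! i) \<longrightarrow> (\<forall>j<i. fst (xs ! j) \<noteq> fst (xs ! i)))"

lemma icond_Cons: "icond (p # ys) \<longleftrightarrow> icond ys \<and> (\<forall>q\<in>set ys. snd q \<longrightarrow> fst q \<noteq> fst p)"
proof
  assume h: "icond (p # ys)"
  have "icond ys" unfolding icond_def
  proof (intro allI impI)
    fix i j assume "i < length ys" "snd (ys ! i)" "j < i"
    with h[unfolded icond_def, rule_format, of "Suc i" "Suc j"] show "fst (ys ! j) \<noteq> fst (ys ! i)" by simp
  qed
  moreover have "\<forall>q\<in>set ys. snd q \<longrightarrow> fst q \<noteq> fst p"
  proof (intro ballI impI)
    fix q assume "q \<in> set ys" "snd q"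
    then obtain i where "i < length ys" "ys ! i = q" by (auto simp: in_set_conv_nth)
    with h[unfolded icond_def, rule_format, of "Suc i" 0] \<open>snd q\<close> show "fst q \<noteq> fst p" by auto
  qed
  ultimately show "icond ys \<and> (\<forall>q\<in>set ys. snd q \<longrightarrow> fst q \<noteq> fst p)" by blast
next
  assume h: "icond ys \<and> (\<forall>q\<in>set ys. snd q \<longrightarrow> fst q \<noteq> fst p)"
  show "icond (p # ys)" unfolding icond_def
  proof (intro allI impI)
    fix i j assume i: "i < length (p # ys)" "snd ((p # ys) ! i)" "j < i"
    then obtain i' where i': "i = Suc i'" by (cases i) auto
    show "fst ((p # ys) ! j) \<noteq> fst ((p # ys) ! i)"
    proof (cases j)
      case 0
      have "ys ! i' \<in> set ys" using i i' by auto
      with h i i' 0 show ?thesis by fastforce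
    next
      case (Suc j')
      with h i i' show ?thesis unfolding icond_def by auto
    qed
  qed
qed

lemma ovl_iff: "ovl xs \<longleftrightarrow> (\<forall>p\<in>set xs. 0 < fst p) \<and> sorted_wrt (\<lambda>a b. a \<ge> b) (map fst xs) \<and> icond xs"
proof (induction xs)
  case Nil
  then show ?case by (simp add: icond_def)
next
  case (Cons p ys)
  then show ?case by (auto simp: icond_Cons)
qed

lemma is_ov_iff: "is_overpartition n xs \<longleftrightarrow> ovl xs \<and> sum_list (map fst xs) = n"
  unfolding is_overpartition_def ovl_iff icond_def by blast

definition ovp :: "nat \<Rightarrow> (nat \<times> bool) multiset set" where
  "ovp m = {M. (\<forall>p\<in>#M. 0 < fst p) \<and> (\<forall>s. count M (s, True) \<le> 1) \<and> sum_mset (image_mset fst M) = m}"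

lemma ovl_valid: "ovl xs \<Longrightarrow> (\<forall>p\<in>#mset xs. 0 < fst p) \<and> (\<forall>s. count (mset xs) (s, True) \<le> 1)"
proof (induction xs)
  case Nil
  then show ?case by simp
next
  case (Cons p ys)
  have "count (mset (p # ys)) (s, True) \<le> 1" for s
  proof (cases "p = (s, True)")
    case True
    have "(s, True) \<notin> set ys" using Cons.prems True by force
    then have "count (mset ys) (s, True) = 0" by (simp add: count_eq_zero_iff)
    with True show ?thesis by simp
  next
    case False
    then show ?thesis using Cons by simp
  qed
  with Cons show ?case by auto
qed

lemma ovl_inj: "ovl xs \<Longrightarrow> ovl ys \<Longrightarrow> mset xs = mset ys \<Longrightarrow> xs = ys"
proof (induction xs arbitrary: ys)
  case Nil
  then show ?case by simp
next
  case (Cons p xs')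
  then obtain q ys' where ys: "ys = q # ys'" by (cases ys) auto
  have setq: "set (p # xs') = set ys" using Cons.prems(3) by (metis set_mset_mset)
  have "q \<in> set (p # xs')" using setq ys by simp
  then have f1: "fst q \<le> fst p" using Cons.prems(1) by auto
  have "p \<in> set (q # ys')" using setq ys by (metis list.set_intros(1))
  then have f2: "fst p \<le> fst q" using Cons.prems(2) ys by auto
  have pq: "p = q"
  proof (rule ccontr)
    assume ne: "p \<noteq> q"
    then have sn: "snd p \<noteq> snd q" using f1 f2 by (auto simp: prod_eq_iff)
    show False
    proof (cases "snd p")
      case True
      have "p \<in> set ys'" using \<open>p \<in> set (q # ys')\<close> ne by auto
      then show False using Cons.prems(2) ys True f1 f2 by auto
    next
      case False
      then have "snd q" using sn by simp
      have "q \<in> set xs'" using \<open>q \<in> set (p # xs')\<close> ne by auto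
      then show False using Cons.prems(1) \<open>snd q\<close> f1 f2 by auto
    qed
  qed
  have "mset xs' = mset ys'" using Cons.prems(3) ys pq by simp
  then have "xs' = ys'" using Cons ys by simp
  then show ?case using ys pq by simp
qed

lemma ovl_surj:
  "(\<forall>p\<in>#M. 0 < fst p) \<Longrightarrow> (\<forall>s. count M (s, True) \<le> 1) \<Longrightarrow> \<exists>xs. ovl xs \<and> mset xs = M"
proof (induction "size M" arbitrary: M rule: less_induct)
  case less
  show ?case
  proof (cases "M = {#}")
    case True
    then show ?thesis by (intro exI[of _ "[]"]) simp
  next
    case False
    define s where "s = Max (fst ` set_mset M)"
    have fin: "finite (fst ` set_mset M)" by simp
    have ne: "fst ` set_mset M \<noteq> {}" using False by simp
    have sM: "s \<in> fst ` set_mset M" unfolding s_def using Max_in[OF fin ne] .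
    have sle: "\<And>q. q \<in># M \<Longrightarrow> fst q \<le> s" unfolding s_def using fin by auto
    define p where "p = (if (s, True) \<in># M then (s, True) else (s, False))"
    have pM: "p \<in># M" using sM unfolding p_def by (cases "(s,True) \<in># M") (auto, metis (full_types) prod.collapse)
    define M' where "M' = M - {#p#}"
    have MM: "M = add_mset p M'" using pM unfolding M'_def by simp
    have "size M' < size M" using MM by simp
    moreover have "\<forall>p\<in>#M'. 0 < fst p" using less.prems(1) MM by simp
    moreover have "\<forall>s. count M' (s, True) \<le> 1"
    proof
      fix s' show "count M' (s', True) \<le> 1" using less.prems(2)[rule_format, of s'] MM
        by (metis count_add_mset le_SucI le_refl nat_le_linear not_less_eq_eq)
    qed
    ultimately obtain xs' where xs': "ovl xs'" "mset xs' = M'" using less.hyps by blast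
    have "ovl (p # xs')"
    proof -
      have "0 < fst p" using less.prems(1) pM by blast
      moreover have "\<forall>q\<in>set xs'. fst q \<le> fst p \<and> (snd q \<longrightarrow> fst q \<noteq> fst p)"
      proof
        fix q assume qx: "q \<in> set xs'"
        then have qM': "q \<in># M'" using xs' by (metis set_mset_mset)
        then have qM: "q \<in># M" using MM by simp
        have fp: "fst p = s" unfolding p_def by simp
        have "fst q \<le> fst p" using sle[OF qM] fp by simp
        moreover have "snd q \<longrightarrow> fst q \<noteq> fst p"
        proof
          assume sq: "snd q"
          show "fst q \<noteq> fst p"
          proof
            assume eq: "fst q = fst p"
            then have qq: "q = (s, True)" using sq fp by (metis prod.collapse)
            then have "(s, True) \<in># M" using qM by simp
            then have "p = (s, True)" unfolding p_def by simp
            then have "count M (s, True) \<ge> 2" using MM qM' qq by simp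
            then show False using less.prems(2) by (metis numeral_le_one_iff semiring_norm(69) order_trans)
          qed
        qed
        ultimately show "fst q \<le> fst p \<and> (snd q \<longrightarrow> fst q \<noteq> fst p)" by blast
      qed
      ultimately show ?thesis using xs' by simp
    qed
    then show ?thesis using xs' MM by (intro exI[of _ "p # xs'"]) simp
  qed
qed

lemma sum_fst_mset: "sum_mset (image_mset fst (mset xs)) = sum_list (map fst xs)"
  by (metis mset_map sum_mset_sum_list)

lemma bij_ov: "bij_betw mset {xs. is_overpartition n xs} (ovp n)"
proof -
  have "inj_on mset {xs. is_overpartition n xs}"
    by (intro inj_onI) (auto simp: is_ov_iff intro: ovl_inj)
  moreover have "mset ` {xs. is_overpartition n xs} = ovp n"
  proof
    show "mset ` {xs. is_overpartition n xs} \<subseteq> ovp n"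
    proof
      fix M assume "M \<in> mset ` {xs. is_overpartition n xs}"
      then obtain xs where xs: "is_overpartition n xs" "M = mset xs" by auto
      then have "ovl xs" "sum_list (map fst xs) = n" by (auto simp: is_ov_iff)
      from ovl_valid[OF this(1)] this(2) xs(2) show "M \<in> ovp n"
        unfolding ovp_def by (simp only: mem_Collect_eq sum_fst_mset) blast
    qed
    show "ovp n \<subseteq> mset ` {xs. is_overpartition n xs}"
    proof
      fix M assume "M \<in> ovp n"
      then obtain xs where "ovl xs" "mset xs = M" using ovl_surj unfolding ovp_def by blast
      then show "M \<in> mset ` {xs. is_overpartition n xs}" using \<open>M \<in> ovp n\<close>
        by (auto simp: is_ov_iff ovp_def sum_fst_mset[symmetric])
    qed
  qed
  ultimately show ?thesis unfolding bij_betw_def by blast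
qed

lemma length_le_sum: "(\<forall>p\<in>set xs. 0 < fst p) \<Longrightarrow> length xs \<le> sum_list (map fst xs)"
  by (induction xs) auto

lemma finite_ov: "finite {xs. is_overpartition n xs}"
proof -
  have "{xs. is_overpartition n xs} \<subseteq> {xs. set xs \<subseteq> {..n} \<times> UNIV \<and> length xs \<le> n}"
  proof
    fix xs assume "xs \<in> {xs. is_overpartition n xs}"
    then have h: "(\<forall>p\<in>set xs. 0 < fst p)" "sum_list (map fst xs) = n"
      by (auto simp: is_overpartition_def)
    have "set xs \<subseteq> {..n} \<times> UNIV"
    proof
      fix p assume "p \<in> set xs"
      then have "fst p \<le> sum_list (map fst xs)" by (intro member_le_sum_list) auto
      then show "p \<in> {..n} \<times> UNIV" using h by (cases p) auto
    qed
    then show "xs \<in> {xs. set xs \<subseteq> {..n} \<times> UNIV \<and> length xs \<le> n}" using length_le_sum[of xs] h by auto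
  qed
  moreover have "finite {xs. set xs \<subseteq> ({..n} \<times> (UNIV::bool set)) \<and> length xs \<le> n}"
    by (intro finite_lists_length_le) auto
  ultimately show ?thesis by (rule finite_subset)
qed

lemma finite_ovp: "finite (ovp n)"
  using bij_ov finite_ov bij_betw_finite by blast

definition ovpL :: "nat \<Rightarrow> nat \<Rightarrow> (nat \<times> bool) multiset set" where
  "ovpL m L = {M \<in> ovp m. \<forall>p\<in>#M. fst p \<le> L}"

lemma add_ovp:
  "add_mset (s, b) M' \<in> ovp m \<longleftrightarrow>
     0 < s \<and> M' \<in> ovp (m - s) \<and> s \<le> m \<and> (b \<longrightarrow> count M' (s, True) = 0)"
proof
  assume h: "add_mset (s, b) M' \<in> ovp m"
  then have h1: "0 < s" "\<forall>p\<in>#M'. 0 < fst p" "s + sum_mset (image_mset fst M') = m"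
    by (auto simp: ovp_def)
  have h2: "count (add_mset (s, b) M') (s', True) \<le> 1" for s' using h by (auto simp: ovp_def)
  have "count M' (s', True) \<le> 1" for s' using h2[of s'] by (simp split: if_splits)
  moreover have "b \<longrightarrow> count M' (s, True) = 0" using h2[of s] by auto
  ultimately show "0 < s \<and> M' \<in> ovp (m - s) \<and> s \<le> m \<and> (b \<longrightarrow> count M' (s, True) = 0)"
    using h1 by (auto simp: ovp_def)
next
  assume h: "0 < s \<and> M' \<in> ovp (m - s) \<and> s \<le> m \<and> (b \<longrightarrow> count M' (s, True) = 0)"
  have "count (add_mset (s, b) M') (s', True) \<le> 1" for s'
    using h by (auto simp: ovp_def)
  then show "add_mset (s, b) M' \<in> ovp m" using h by (auto simp: ovp_def)
qed

lemma add_ovpL: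
  "add_mset (s, b) M' \<in> ovpL m L \<longleftrightarrow>
     0 < s \<and> s \<le> L \<and> M' \<in> ovpL (m - s) L \<and> s \<le> m \<and> (b \<longrightarrow> count M' (s, True) = 0)"
  unfolding ovpL_def using add_ovp by auto

lemma ovp_part_le: "M \<in> ovp m \<Longrightarrow> p \<in># M \<Longrightarrow> fst p \<le> m"
proof -
  assume "M \<in> ovp m" "p \<in># M"
  then obtain M' where "M = add_mset p M'" by (metis insert_DiffM)
  with \<open>M \<in> ovp m\<close> show ?thesis by (auto simp: ovp_def)
qed

lemma ovpL_eq: "m \<le> L \<Longrightarrow> ovpL m L = ovp m"
  unfolding ovpL_def using ovp_part_le by fastforce

lemma finite_ovpL: "finite (ovpL m L)"
  unfolding ovpL_def using finite_ovp by simp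

lemma bijB1:
  assumes "0 < s" "s \<le> L" "s \<le> m"
  shows "bij_betw (\<lambda>M. M - {#(s, False)#}) {M \<in> ovpL m L. (s, False) \<in># M} (ovpL (m - s) L)"
proof (rule bij_betw_byWitness[where f' = "add_mset (s, False)"])
  show "\<forall>a\<in>{M \<in> ovpL m L. (s, False) \<in># M}. add_mset (s, False) (a - {#(s, False)#}) = a"
    by (auto simp: insert_DiffM)
  show "\<forall>a'\<in>ovpL (m - s) L. add_mset (s, False) a' - {#(s, False)#} = a'" by simp
  show "(\<lambda>M. M - {#(s, False)#}) ` {M \<in> ovpL m L. (s, False) \<in># M} \<subseteq> ovpL (m - s) L"
  proof
    fix M' assume "M' \<in> (\<lambda>M. M - {#(s, False)#}) ` {M \<in> ovpL m L. (s, False) \<in># M}"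
    then obtain M where M: "M \<in> ovpL m L" "(s, False) \<in># M" "M' = M - {#(s, False)#}" by auto
    then have "M = add_mset (s, False) M'" by (simp add: insert_DiffM)
    with M(1) show "M' \<in> ovpL (m - s) L" using add_ovpL by metis
  qed
  show "add_mset (s, False) ` ovpL (m - s) L \<subseteq> {M \<in> ovpL m L. (s, False) \<in># M}"
    using assms add_ovpL by auto
qed

lemma bijB2:
  assumes "0 < s" "s \<le> L" "s \<le> m"
  shows "bij_betw (\<lambda>M. M - {#(s, True)#})
           {M \<in> ovpL m L. (s, False) \<notin># M \<and> (s, True) \<in># M}
           {M \<in> ovpL (m - s) L. (s, False) \<notin># M \<and> (s, True) \<notin># M}"
proof (rule bij_betw_byWitness[where f' = "add_mset (s, True)"])
  show "\<forall>a\<in>{M \<in> ovpL m L. (s, False) \<notin># M \<and> (s, True) \<in># M}. add_mset (s, True) (a - {#(s, True)#}) = a"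
    by (auto simp: insert_DiffM)
  show "\<forall>a'\<in>{M \<in> ovpL (m - s) L. (s, False) \<notin># M \<and> (s, True) \<notin># M}. add_mset (s, True) a' - {#(s, True)#} = a'" by simp
  show "(\<lambda>M. M - {#(s, True)#}) ` {M \<in> ovpL m L. (s, False) \<notin># M \<and> (s, True) \<in># M}
        \<subseteq> {M \<in> ovpL (m - s) L. (s, False) \<notin># M \<and> (s, True) \<notin># M}"
  proof
    fix M' assume "M' \<in> (\<lambda>M. M - {#(s, True)#}) ` {M \<in> ovpL m L. (s, False) \<notin># M \<and> (s, True) \<in># M}"
    then obtain M where M: "M \<in> ovpL m L" "(s, False) \<notin># M" "(s, True) \<in># M" "M' = M - {#(s, True)#}" by auto
    then have MM: "M = add_mset (s, True) M'" by (simp add: insert_DiffM)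
    with M(1) have "M' \<in> ovpL (m - s) L" "count M' (s, True) = 0" using add_ovpL by metis+
    moreover have "(s, False) \<notin># M'" using M(2) MM by simp
    ultimately show "M' \<in> {M \<in> ovpL (m - s) L. (s, False) \<notin># M \<and> (s, True) \<notin># M}"
      by (simp add: count_eq_zero_iff)
  qed
  show "add_mset (s, True) ` {M \<in> ovpL (m - s) L. (s, False) \<notin># M \<and> (s, True) \<notin># M}
        \<subseteq> {M \<in> ovpL m L. (s, False) \<notin># M \<and> (s, True) \<in># M}"
    using assms add_ovpL by (auto simp: count_eq_zero_iff)
qed

lemma ovpL_Suc_none:
  "{M \<in> ovpL m (Suc L). (Suc L, False) \<notin># M \<and> (Suc L, True) \<notin># M} = ovpL m L"
proof -
  have "fst p \<le> L" if "\<forall>p\<in>#M. fst p \<le> Suc L" "(Suc L, False) \<notin># M" "(Suc L, True) \<notin># M" "p \<in># M" for M p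
  proof (rule ccontr)
    assume "\<not> fst p \<le> L"
    then have "fst p = Suc L" using that by fastforce
    then have "p = (Suc L, False) \<or> p = (Suc L, True)" by (metis (full_types) prod.collapse)
    then show False using that by auto
  qed
  note aux = this
  show ?thesis
  proof (intro set_eqI iffI)
    fix M assume "M \<in> {M \<in> ovpL m (Suc L). (Suc L, False) \<notin># M \<and> (Suc L, True) \<notin># M}"
    then have "M \<in> ovp m" "\<forall>p\<in>#M. fst p \<le> Suc L" "(Suc L, False) \<notin># M" "(Suc L, True) \<notin># M"
      unfolding ovpL_def by auto
    then show "M \<in> ovpL m L" unfolding ovpL_def using aux[of M] by blast
  next
    fix M assume "M \<in> ovpL m L"
    then have h: "M \<in> ovp m" "\<forall>p\<in>#M. fst p \<le> L" unfolding ovpL_def by auto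
    have "(Suc L, False) \<notin># M" using h(2) by (metis Suc_n_not_le_n fst_conv)
    moreover have "(Suc L, True) \<notin># M" using h(2) by (metis Suc_n_not_le_n fst_conv)
    moreover have "\<forall>p\<in>#M. fst p \<le> Suc L" using h(2) le_SucI by blast
    ultimately show "M \<in> {M \<in> ovpL m (Suc L). (Suc L, False) \<notin># M \<and> (Suc L, True) \<notin># M}"
      using h(1) unfolding ovpL_def by blast
  qed
qed

lemma card_ovpL_Suc:
  "card (ovpL m (Suc L)) = card (ovpL m L) +
     (if Suc L \<le> m then card (ovpL (m - Suc L) (Suc L)) + card (ovpL (m - Suc L) L) else 0)"
proof -
  define S where "S = Suc L"
  define A1 where "A1 = {M \<in> ovpL m S. (S, False) \<in># M}"
  define A2 where "A2 = {M \<in> ovpL m S. (S, False) \<notin># M \<and> (S, True) \<in># M}"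
  define A3 where "A3 = {M \<in> ovpL m S. (S, False) \<notin># M \<and> (S, True) \<notin># M}"
  have U: "ovpL m S = A1 \<union> A2 \<union> A3" unfolding A1_def A2_def A3_def by blast
  have fin: "finite A1" "finite A2" "finite A3" unfolding A1_def A2_def A3_def using finite_ovpL by auto
  have d12: "A1 \<inter> A2 = {}" unfolding A1_def A2_def by blast
  have d3: "(A1 \<union> A2) \<inter> A3 = {}" unfolding A1_def A2_def A3_def by blast
  have "card (ovpL m S) = card (A1 \<union> A2) + card A3"
    unfolding U using fin d3 by (intro card_Un_disjoint) auto
  also have "card (A1 \<union> A2) = card A1 + card A2"
    using fin d12 by (intro card_Un_disjoint) auto
  finally have "card (ovpL m S) = card A1 + card A2 + card A3" .
  moreover have "A3 = ovpL m L" unfolding A3_def S_def by (rule ovpL_Suc_none)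
  moreover have "card A1 = (if S \<le> m then card (ovpL (m - S) S) else 0)"
  proof (cases "S \<le> m")
    case True
    then show ?thesis using bij_betw_same_card[OF bijB1[of S S m]] unfolding A1_def S_def by simp
  next
    case False
    have "A1 = {}" unfolding A1_def ovpL_def using ovp_part_le False by fastforce
    then show ?thesis using False by simp
  qed
  moreover have "card A2 = (if S \<le> m then card (ovpL (m - S) L) else 0)"
  proof (cases "S \<le> m")
    case True
    then show ?thesis using bij_betw_same_card[OF bijB2[of S S m]] ovpL_Suc_none[of "m - S" L]
      unfolding A2_def S_def by simp
  next
    case False
    have "A2 = {}" unfolding A2_def ovpL_def using ovp_part_le False by fastforce
    then show ?thesis using False by simp
  qed
  ultimately show ?thesis unfolding S_def by simp
qed

definition OVL :: "nat \<Rightarrow> real fps" where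
  "OVL L = Abs_fps (\<lambda>m. real (card (ovpL m L)))"

lemma ovpL_0: "ovpL m 0 = (if m = 0 then {{#}} else {})"
proof -
  have "M = {#}" if "M \<in> ovpL m 0" for M
  proof (rule ccontr)
    assume "M \<noteq> {#}"
    then obtain p where "p \<in># M" by (meson multiset_nonemptyE)
    with that show False unfolding ovpL_def ovp_def by fastforce
  qed
  moreover have "{#} \<in> ovpL m 0 \<longleftrightarrow> m = 0" unfolding ovpL_def ovp_def by auto
  ultimately show ?thesis by auto
qed

lemma OVL_0: "OVL 0 = 1"
  by (rule fps_ext) (simp add: OVL_def ovpL_0)

lemma OVL_Suc: "OVL (Suc L) * (1 - fps_X ^ Suc L) = OVL L * (1 + fps_X ^ Suc L)"
proof (rule fps_ext)
  fix m
  show "(OVL (Suc L) * (1 - fps_X ^ Suc L)) $ m = (OVL L * (1 + fps_X ^ Suc L)) $ m"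
    by (simp add: ring_distribs fps_X_power_mult_right_nth OVL_def card_ovpL_Suc[of m L] not_less del: power_Suc)
qed

lemma OVL_prod:
  "OVL (Suc n) * (\<Prod>i\<le>n. (1 - fps_X * fps_X ^ i)) = (\<Prod>i\<le>n. (1 + fps_X * fps_X ^ i))"
proof (induction n)
  case 0
  then show ?case using OVL_Suc[of 0] by (simp add: OVL_0)
next
  case (Suc n)
  have "OVL (Suc (Suc n)) * (\<Prod>i\<le>Suc n. (1 - fps_X * fps_X ^ i))
      = (OVL (Suc (Suc n)) * (1 - fps_X ^ Suc (Suc n))) * (\<Prod>i\<le>n. (1 - fps_X * fps_X ^ i))"
    by (simp add: prod.atMost_Suc mult_ac)
  also have "\<dots> = (1 + fps_X ^ Suc (Suc n)) * (OVL (Suc n) * (\<Prod>i\<le>n. (1 - fps_X * fps_X ^ i)))"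
    by (subst OVL_Suc) (simp only: mult_ac)
  also have "\<dots> = (\<Prod>i\<le>Suc n. (1 + fps_X * fps_X ^ i))"
    using Suc by (simp add: prod.atMost_Suc mult_ac)
  finally show ?case .
qed

definition PB :: "real fps" where
  "PB = Abs_fps (\<lambda>m. real (card (ovp m)))"

lemma OVL_PB: "m \<le> L \<Longrightarrow> OVL L $ m = PB $ m"
  by (simp add: OVL_def PB_def ovpL_eq)

definition Cs :: "nat \<Rightarrow> nat \<Rightarrow> nat" where
  "Cs s n = (\<Sum>M\<in>ovp n. count M (s, False))"

lemma Cs_small: "n < s \<Longrightarrow> Cs s n = 0"
proof -
  assume "n < s"
  have "count M (s, False) = 0" if "M \<in> ovp n" for M
    using ovp_part_le[OF that, of "(s, False)"] \<open>n < s\<close> by (auto simp: count_eq_zero_iff)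
  then show ?thesis unfolding Cs_def by simp
qed

lemma Cs_rec:
  assumes "0 < s" "s \<le> n"
  shows "Cs s n = Cs s (n - s) + card (ovp (n - s))"
proof -
  define A where "A = {M \<in> ovpL n n. (s, False) \<in># M}"
  have "Cs s n = (\<Sum>M\<in>ovpL n n. count M (s, False))" unfolding Cs_def by (simp add: ovpL_eq)
  also have "\<dots> = (\<Sum>M\<in>A. count M (s, False))"
    unfolding A_def by (rule sum.mono_neutral_right) (auto simp: finite_ovpL count_eq_zero_iff)
  also have "\<dots> = (\<Sum>M\<in>A. count (M - {#(s, False)#}) (s, False) + 1)"
    by (rule sum.cong) (auto simp: A_def)
  also have "\<dots> = (\<Sum>M'\<in>ovpL (n - s) n. count M' (s, False) + 1)"
    using sum.reindex_bij_betw[OF bijB1[of s n n], of "\<lambda>M'. count M' (s, False) + 1"] assms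
    unfolding A_def by simp
  also have "\<dots> = Cs s (n - s) + card (ovp (n - s))"
    by (simp add: Cs_def sum_Suc ovpL_eq)
  finally show ?thesis .
qed

definition CS :: "nat \<Rightarrow> real fps" where
  "CS s = Abs_fps (\<lambda>n. real (Cs s n))"

definition Geo :: "nat \<Rightarrow> real fps" where
  "Geo s = Abs_fps (\<lambda>t. if 0 < t \<and> s dvd t then 1 else 0)"

lemma Geo_eq: assumes "0 < s" shows "Geo s * (1 - fps_X ^ s) = fps_X ^ s"
proof (rule fps_ext)
  fix t
  show "(Geo s * (1 - fps_X ^ s)) $ t = (fps_X ^ s :: real fps) $ t"
  proof (cases "t < s")
    case True
    then have "\<not> (0 < t \<and> s dvd t)" by (auto dest: dvd_imp_le)
    then show ?thesis using True by (simp add: ring_distribs fps_X_power_mult_right_nth Geo_def)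
  next
    case False
    then show ?thesis using assms
      by (cases "t = s") (auto simp: ring_distribs fps_X_power_mult_right_nth Geo_def dvd_minus_self)
  qed
qed

lemma CS_eq: assumes "0 < s" shows "CS s * (1 - fps_X ^ s) = fps_X ^ s * PB"
proof (rule fps_ext)
  fix n
  show "(CS s * (1 - fps_X ^ s)) $ n = (fps_X ^ s * PB) $ n"
  proof (cases "n < s")
    case True
    then show ?thesis by (simp add: ring_distribs fps_X_power_mult_right_nth fps_X_power_mult_nth CS_def Cs_small)
  next
    case False
    then show ?thesis using Cs_rec[OF assms, of n]
      by (simp add: ring_distribs fps_X_power_mult_right_nth fps_X_power_mult_nth CS_def PB_def)
  qed
qed

lemma one_minus_Xpow_ne: "(1 - fps_X ^ s :: real fps) \<noteq> 0" if "0 < s"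
proof -
  have h: "(1 - fps_X ^ s :: real fps) $ 0 = 1" using that by simp
  show ?thesis
  proof
    assume e: "(1 - fps_X ^ s :: real fps) = 0"
    from h[unfolded e] show False by simp
  qed
qed

lemma CS_PB: assumes "0 < s" shows "CS s = PB * Geo s"
proof -
  have "(CS s - PB * Geo s) * (1 - fps_X ^ s) = CS s * (1 - fps_X ^ s) - PB * (Geo s * (1 - fps_X ^ s))"
    by (simp only: left_diff_distrib mult.assoc)
  also have "\<dots> = 0" by (simp only: CS_eq[OF assms] Geo_eq[OF assms]) (simp add: mult.commute)
  finally have "(CS s - PB * Geo s) * (1 - fps_X ^ s) = 0" .
  then show ?thesis using one_minus_Xpow_ne[OF assms] by simp
qed

lemma sum_w:
  fixes k n :: nat
  shows "set_mset M \<subseteq> {1..n} \<times> UNIV \<Longrightarrow>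
    sum_mset (image_mset (\<lambda>p. if \<not> snd p \<and> k dvd fst p then fst p else 0) M) =
    (\<Sum>s\<in>{1..n}. (if k dvd s then s else 0) * count M (s, False))"
proof (induction M)
  case empty
  then show ?case by simp
next
  case (add x M)
  obtain a b where x: "x = (a, b)" by (cases x)
  have a: "a \<in> {1..n}" using add.prems x by auto
  have IH: "sum_mset (image_mset (\<lambda>p. if \<not> snd p \<and> k dvd fst p then fst p else 0) M) =
    (\<Sum>s\<in>{1..n}. (if k dvd s then s else 0) * count M (s, False))" using add by auto
  have "(\<Sum>s\<in>{1..n}. (if k dvd s then s else 0) * count (add_mset x M) (s, False)) =
        (\<Sum>s\<in>{1..n}. (if k dvd s then s else 0) * count M (s, False)) +
        (\<Sum>s\<in>{1..n}. (if k dvd s then s else 0) * (if x = (s, False) then 1 else 0))"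
    by (subst sum.distrib[symmetric]) (rule sum.cong, auto)
  also have "(\<Sum>s\<in>{1..n}. (if k dvd s then s else 0) * (if x = (s, False) then 1 else 0)) =
     (if \<not> b \<and> k dvd a then a else 0)"
  proof (cases b)
    case True
    then show ?thesis using x by simp
  next
    case False
    have "(\<Sum>s\<in>{1..n}. (if k dvd s then s else 0) * (if x = (s, False) then 1 else 0)) =
          (\<Sum>s\<in>{1..n}. if s = a then (if k dvd s then s else 0) else 0)"
      by (rule sum.cong) (auto simp: x False)
    also have "\<dots> = (if k dvd a then a else 0)" using a by (simp add: sum.delta')
    finally show ?thesis using False by simp
  qed
  finally show ?case using IH x by simp
qed

lemma nov_Cs: "nov k n = (\<Sum>s\<in>{1..n}. (if k dvd s then s else 0) * Cs s n)"
proof -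
  define w where "w = (\<lambda>p::nat \<times> bool. if \<not> snd p \<and> k dvd fst p then fst p else 0)"
  have "nov k n = (\<Sum>xs\<in>{xs. is_overpartition n xs}. sum_mset (image_mset w (mset xs)))"
    unfolding nov_def w_def by (rule sum.cong) (auto simp: sum_mset_sum_list simp flip: mset_map)
  also have "\<dots> = (\<Sum>M\<in>ovp n. sum_mset (image_mset w M))"
    by (rule sum.reindex_bij_betw[OF bij_ov])
  also have "\<dots> = (\<Sum>M\<in>ovp n. \<Sum>s\<in>{1..n}. (if k dvd s then s else 0) * count M (s, False))"
  proof (rule sum.cong)
    fix M assume M: "M \<in> ovp n"
    have "set_mset M \<subseteq> {1..n} \<times> UNIV"
    proof
      fix p assume "p \<in># M"
      then have "0 < fst p" "fst p \<le> n" using M ovp_part_le[OF M] by (auto simp: ovp_def)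
      then show "p \<in> {1..n} \<times> UNIV" by (cases p) auto
    qed
    then show "sum_mset (image_mset w M) = (\<Sum>s\<in>{1..n}. (if k dvd s then s else 0) * count M (s, False))"
      unfolding w_def by (rule sum_w)
  qed simp
  also have "\<dots> = (\<Sum>s\<in>{1..n}. (if k dvd s then s else 0) * Cs s n)"
    unfolding Cs_def by (subst sum.swap) (simp add: sum_distrib_left)
  finally show ?thesis .
qed

lemma reindex_k:
  fixes f :: "nat \<Rightarrow> 'a::comm_monoid_add"
  assumes k: "0 < k" and f: "\<And>s. n < s \<Longrightarrow> f s = 0"
  shows "(\<Sum>s\<in>{1..n}. if k dvd s then f s else 0) = (\<Sum>j\<le>n. f (k * (j + 1)))"
proof -
  have "(\<Sum>j\<le>n. f (k * (j + 1))) = (\<Sum>j\<in>{j. j \<le> n \<and> k * (j + 1) \<le> n}. f (k * (j + 1)))"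
    by (rule sum.mono_neutral_right) (auto, metis f not_le)
  also have "\<dots> = (\<Sum>s\<in>(\<lambda>j. k * (j + 1)) ` {j. j \<le> n \<and> k * (j + 1) \<le> n}. f s)"
    by (subst sum.reindex) (use k in \<open>auto simp: inj_on_def\<close>)
  also have "(\<lambda>j. k * (j + 1)) ` {j. j \<le> n \<and> k * (j + 1) \<le> n} = {s \<in> {1..n}. k dvd s}"
  proof (intro set_eqI iffI)
    fix s assume "s \<in> (\<lambda>j. k * (j + 1)) ` {j. j \<le> n \<and> k * (j + 1) \<le> n}"
    then show "s \<in> {s \<in> {1..n}. k dvd s}" using k by auto
  next
    fix s assume s: "s \<in> {s \<in> {1..n}. k dvd s}"
    then obtain c where c: "s = k * c" by auto
    then obtain c' where c': "c = Suc c'" using s by (cases c) auto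
    have "c \<le> s" using c k by simp
    then have "c' \<le> n" "k * (c' + 1) \<le> n" using s c c' by auto
    then show "s \<in> (\<lambda>j. k * (j + 1)) ` {j. j \<le> n \<and> k * (j + 1) \<le> n}"
      using c c' by (intro image_eqI[of _ _ c']) auto
  qed
  also have "(\<Sum>s\<in>{s \<in> {1..n}. k dvd s}. f s) = (\<Sum>s\<in>{1..n}. if k dvd s then f s else 0)"
    by (rule sum.inter_filter) simp
  finally show ?thesis by simp
qed

lemma nov_fps:
  assumes k: "0 < k"
  shows "real (nov k n) = (PB * (\<Sum>j\<le>n. fps_const (real (k * (j + 1))) * Geo (k * (j + 1)))) $ n"
proof -
  have "real (nov k n) = (\<Sum>s\<in>{1..n}. if k dvd s then real s * real (Cs s n) else 0)"
    unfolding nov_Cs of_nat_sum by (rule sum.cong) auto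
  also have "\<dots> = (\<Sum>j\<le>n. real (k * (j + 1)) * real (Cs (k * (j + 1)) n))"
    by (rule reindex_k[OF k]) (simp add: Cs_small)
  also have "\<dots> = (\<Sum>j\<le>n. real (k * (j + 1)) * (PB * Geo (k * (j + 1))) $ n)"
  proof (rule sum.cong)
    fix j assume "j \<in> {..n}"
    have "0 < k * (j + 1)" using k by simp
    then have "CS (k * (j + 1)) = PB * Geo (k * (j + 1))" by (rule CS_PB)
    then have "(PB * Geo (k * (j + 1))) $ n = CS (k * (j + 1)) $ n" by simp
    also have "\<dots> = real (Cs (k * (j + 1)) n)" by (simp add: CS_def)
    finally show "real (k * (j + 1)) * real (Cs (k * (j + 1)) n) = real (k * (j + 1)) * (PB * Geo (k * (j + 1))) $ n"
      by simp
  qed simp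
  also have "\<dots> = (PB * (\<Sum>j\<le>n. fps_const (real (k * (j + 1))) * Geo (k * (j + 1)))) $ n"
    unfolding sum_distrib_left fps_sum_nth
  proof (rule sum.cong)
    fix j
    have "PB * (fps_const (real (k * (j + 1))) * Geo (k * (j + 1))) =
          fps_const (real (k * (j + 1))) * (PB * Geo (k * (j + 1)))"
      by (rule mult.left_commute)
    then show "real (k * (j + 1)) * (PB * Geo (k * (j + 1))) $ n =
      (PB * (fps_const (real (k * (j + 1))) * Geo (k * (j + 1)))) $ n"
      by (simp only: fps_mult_left_const_nth)
  qed simp
  finally show ?thesis .
qed

definition supp :: "real fls \<Rightarrow> int set" where "supp f = {m. f $$ m \<noteq> 0}"
definition fs :: "real fls \<Rightarrow> bool" where "fs f = finite (supp f)"
definition mom :: "nat \<Rightarrow> real fls \<Rightarrow> real" where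
  "mom r f = (\<Sum>m\<in>supp f. (of_int m) ^ r * f $$ m)"

lemma mom_sup: "finite A \<Longrightarrow> supp f \<subseteq> A \<Longrightarrow> mom r f = (\<Sum>m\<in>A. (of_int m) ^ r * f $$ m)"
  unfolding mom_def by (rule sum.mono_neutral_left) (auto simp: supp_def)

lemma fs_add: "fs f \<Longrightarrow> fs g \<Longrightarrow> fs (f + g)"
  unfolding fs_def by (rule finite_subset[of _ "supp f \<union> supp g"]) (auto simp: supp_def)

lemma mom_add: "fs f \<Longrightarrow> fs g \<Longrightarrow> mom r (f + g) = mom r f + mom r g"
proof -
  assume f: "fs f" and g: "fs g"
  let ?A = "supp f \<union> supp g"
  have fin: "finite ?A" using f g by (simp add: fs_def)
  have "mom r (f + g) = (\<Sum>m\<in>?A. (of_int m) ^ r * (f + g) $$ m)"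
    by (rule mom_sup[OF fin]) (auto simp: supp_def)
  also have "\<dots> = (\<Sum>m\<in>?A. (of_int m) ^ r * f $$ m) + (\<Sum>m\<in>?A. (of_int m) ^ r * g $$ m)"
    by (simp add: sum.distrib ring_distribs)
  also have "\<dots> = mom r f + mom r g"
    using mom_sup[OF fin, of f r] mom_sup[OF fin, of g r] by auto
  finally show ?thesis .
qed

lemma fs_uminus: "fs f \<Longrightarrow> fs (- f)"
  unfolding fs_def supp_def by simp

lemma mom_uminus: "mom r (- f) = - mom r f"
  unfolding mom_def supp_def by (simp add: sum_negf)

lemma fs_diff: "fs f \<Longrightarrow> fs g \<Longrightarrow> fs (f - g)"
  using fs_add[of f "- g"] fs_uminus[of g] by simp

lemma mom_diff: "fs f \<Longrightarrow> fs g \<Longrightarrow> mom r (f - g) = mom r f - mom r g"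
  using mom_add[of f "- g" r] fs_uminus[of g] mom_uminus[of r g] by simp

lemma fs_zero: "fs 0" by (simp add: fs_def supp_def)
lemma mom_zero: "mom r 0 = 0" by (simp add: mom_def supp_def)

lemma fs_one: "fs 1" unfolding fs_def supp_def
  by (rule finite_subset[of _ "{0}"]) auto
lemma mom_one: "mom r 1 = 0 ^ r"
  by (subst mom_sup[of "{0}"]) (auto simp: supp_def)

lemma fs_X: "fs fls_X" unfolding fs_def supp_def
  by (rule finite_subset[of _ "{1}"]) auto
lemma mom_X: "mom r fls_X = 1"
  by (subst mom_sup[of "{1}"]) (auto simp: supp_def)

lemma fs_Xinv: "fs fls_X_inv" unfolding fs_def supp_def
  by (rule finite_subset[of _ "{-1}"]) auto
lemma mom_Xinv: "mom r fls_X_inv = (-1) ^ r"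
  by (subst mom_sup[of "{-1}"]) (auto simp: supp_def)

lemma fs_sum: "finite I \<Longrightarrow> (\<And>i. i \<in> I \<Longrightarrow> fs (f i)) \<Longrightarrow> fs (\<Sum>i\<in>I. f i)"
  by (induction I rule: finite_induct) (auto intro: fs_add simp: fs_zero)

lemma mom_sum: "finite I \<Longrightarrow> (\<And>i. i \<in> I \<Longrightarrow> fs (f i)) \<Longrightarrow> mom r (\<Sum>i\<in>I. f i) = (\<Sum>i\<in>I. mom r (f i))"
proof (induction I rule: finite_induct)
  case empty
  then show ?case by (simp add: mom_zero)
next
  case (insert x F)
  then show ?case by (simp add: mom_add fs_sum)
qed

lemma times_nth_supp:
  assumes f: "fs f"
  shows "(f * g) $$ n = (\<Sum>a\<in>supp f. f $$ a * g $$ (n - a))"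
proof -
  define I where "I = {fls_subdegree f..n - fls_subdegree g}"
  have "(f * g) $$ n = (\<Sum>a\<in>I. f $$ a * g $$ (n - a))"
    unfolding I_def by (rule fls_times_nth(2))
  also have "\<dots> = (\<Sum>a\<in>I \<inter> supp f. f $$ a * g $$ (n - a))"
    by (rule sum.mono_neutral_right) (auto simp: I_def supp_def)
  also have "\<dots> = (\<Sum>a\<in>supp f. f $$ a * g $$ (n - a))"
  proof (rule sum.mono_neutral_left)
    show "finite (supp f)" using f by (simp add: fs_def)
    show "I \<inter> supp f \<subseteq> supp f" by blast
    show "\<forall>i\<in>supp f - I \<inter> supp f. f $$ i * g $$ (n - i) = 0"
    proof
      fix i assume i: "i \<in> supp f - I \<inter> supp f"
      then have "f $$ i \<noteq> 0" by (simp add: supp_def)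
      then have "fls_subdegree f \<le> i" by (rule fls_subdegree_leI)
      then have "n - i < fls_subdegree g" using i by (auto simp: I_def)
      then show "f $$ i * g $$ (n - i) = 0" by simp
    qed
  qed
  finally show ?thesis .
qed

lemma mom_mult_gen:
  assumes f: "fs f" and g: "fs g"
  shows "fs (f * g)"
    and "mom r (f * g) = (\<Sum>a\<in>supp f. \<Sum>b\<in>supp g. (of_int (a + b)) ^ r * (f $$ a * g $$ b))"
proof -
  define S where "S = (\<lambda>(a, b). a + b) ` (supp f \<times> supp g)"
  have finS: "finite S" using f g by (simp add: S_def fs_def)
  have sub: "supp (f * g) \<subseteq> S"
  proof
    fix n assume "n \<in> supp (f * g)"
    then have "(\<Sum>a\<in>supp f. f $$ a * g $$ (n - a)) \<noteq> 0"
      using times_nth_supp[OF f] by (simp add: supp_def)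
    then obtain a where a: "a \<in> supp f" "f $$ a * g $$ (n - a) \<noteq> 0"
      by (meson sum.not_neutral_contains_not_neutral)
    then have "n - a \<in> supp g" by (simp add: supp_def)
    then show "n \<in> S" unfolding S_def using a by (intro image_eqI[of _ _ "(a, n - a)"]) auto
  qed
  show "fs (f * g)" unfolding fs_def using finite_subset[OF sub finS] .
  have "mom r (f * g) = (\<Sum>n\<in>S. (of_int n) ^ r * (f * g) $$ n)"
    by (rule mom_sup[OF finS sub])
  also have "\<dots> = (\<Sum>n\<in>S. \<Sum>a\<in>supp f. (of_int n) ^ r * (f $$ a * g $$ (n - a)))"
    by (simp add: times_nth_supp[OF f] sum_distrib_left)
  also have "\<dots> = (\<Sum>a\<in>supp f. \<Sum>n\<in>S. (of_int n) ^ r * (f $$ a * g $$ (n - a)))"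
    by (rule sum.swap)
  also have "\<dots> = (\<Sum>a\<in>supp f. \<Sum>b\<in>supp g. (of_int (a + b)) ^ r * (f $$ a * g $$ b))"
  proof (rule sum.cong)
    fix a assume a: "a \<in> supp f"
    have "(\<Sum>b\<in>supp g. (of_int (a + b)) ^ r * (f $$ a * g $$ b)) =
          (\<Sum>n\<in>(\<lambda>b. a + b) ` supp g. (of_int n) ^ r * (f $$ a * g $$ (n - a)))"
      by (subst sum.reindex) (auto simp: inj_on_def)
    also have "\<dots> = (\<Sum>n\<in>S. (of_int n) ^ r * (f $$ a * g $$ (n - a)))"
    proof (rule sum.mono_neutral_left[OF finS])
      show "(+) a ` supp g \<subseteq> S" using a unfolding S_def by auto
      show "\<forall>i\<in>S - (+) a ` supp g. of_int i ^ r * (f $$ a * g $$ (i - a)) = 0"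
      proof
        fix i assume "i \<in> S - (+) a ` supp g"
        then have "i - a \<notin> supp g" by (metis DiffD2 add_diff_cancel_left' diff_add_cancel image_eqI)
        then show "of_int i ^ r * (f $$ a * g $$ (i - a)) = 0" by (simp add: supp_def)
      qed
    qed
    finally show "(\<Sum>n\<in>S. (of_int n) ^ r * (f $$ a * g $$ (n - a))) =
          (\<Sum>b\<in>supp g. (of_int (a + b)) ^ r * (f $$ a * g $$ b))" by simp
  qed simp
  finally show "mom r (f * g) = (\<Sum>a\<in>supp f. \<Sum>b\<in>supp g. (of_int (a + b)) ^ r * (f $$ a * g $$ b))" .
qed

lemma mom0_mult: assumes f: "fs f" and g: "fs g" shows "mom 0 (f * g) = mom 0 f * mom 0 g"
proof -
  have "mom 0 (f * g) = (\<Sum>a\<in>supp f. \<Sum>b\<in>supp g. (of_int (a + b)) ^ 0 * (f $$ a * g $$ b))"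
    by (rule mom_mult_gen(2)[OF f g])
  also have "\<dots> = mom 0 f * mom 0 g" by (simp add: mom_def sum_product)
  finally show ?thesis .
qed

lemma mom1_mult: assumes f: "fs f" and g: "fs g"
  shows "mom 1 (f * g) = mom 1 f * mom 0 g + mom 0 f * mom 1 g"
proof -
  have "mom 1 (f * g) = (\<Sum>a\<in>supp f. \<Sum>b\<in>supp g. (of_int (a + b)) ^ 1 * (f $$ a * g $$ b))"
    by (rule mom_mult_gen(2)[OF f g])
  also have "\<dots> = (\<Sum>a\<in>supp f. \<Sum>b\<in>supp g. (of_int a * f $$ a) * g $$ b + f $$ a * (of_int b * g $$ b))"
    by (intro sum.cong refl) (simp add: algebra_simps)
  also have "\<dots> = (\<Sum>a\<in>supp f. \<Sum>b\<in>supp g. (of_int a * f $$ a) * g $$ b) +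
                   (\<Sum>a\<in>supp f. \<Sum>b\<in>supp g. f $$ a * (of_int b * g $$ b))"
    by (simp add: sum.distrib)
  also have "\<dots> = mom 1 f * mom 0 g + mom 0 f * mom 1 g"
    by (simp add: mom_def sum_product)
  finally show ?thesis .
qed

lemma mom2_mult: assumes f: "fs f" and g: "fs g"
  shows "mom 2 (f * g) = mom 2 f * mom 0 g + 2 * (mom 1 f * mom 1 g) + mom 0 f * mom 2 g"
proof -
  have "mom 2 (f * g) = (\<Sum>a\<in>supp f. \<Sum>b\<in>supp g. (of_int (a + b)) ^ 2 * (f $$ a * g $$ b))"
    by (rule mom_mult_gen(2)[OF f g])
  also have "\<dots> = (\<Sum>a\<in>supp f. \<Sum>b\<in>supp g. ((of_int a)^2 * f $$ a) * g $$ b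
      + 2 * ((of_int a * f $$ a) * (of_int b * g $$ b)) + f $$ a * ((of_int b)^2 * g $$ b))"
    by (intro sum.cong refl) (simp add: power2_eq_square algebra_simps)
  also have "\<dots> = (\<Sum>a\<in>supp f. \<Sum>b\<in>supp g. ((of_int a)^2 * f $$ a) * g $$ b) +
      2 * (\<Sum>a\<in>supp f. \<Sum>b\<in>supp g. (of_int a * f $$ a) * (of_int b * g $$ b)) +
      (\<Sum>a\<in>supp f. \<Sum>b\<in>supp g. f $$ a * ((of_int b)^2 * g $$ b))"
    by (simp add: sum.distrib sum_distrib_left)
  also have "\<dots> = mom 2 f * mom 0 g + 2 * (mom 1 f * mom 1 g) + mom 0 f * mom 2 g"
    by (simp add: mom_def sum_product)
  finally show ?thesis .
qed

definition FS :: "ser \<Rightarrow> bool" where "FS F = (\<forall>j. fs (F $ j))"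
definition Mom :: "nat \<Rightarrow> ser \<Rightarrow> real fps" where "Mom r F = Abs_fps (\<lambda>j. mom r (F $ j))"
definition phi :: "ser \<Rightarrow> real fps \<Rightarrow> real fps \<Rightarrow> real fps \<Rightarrow> bool" where
  "phi F a b c = (FS F \<and> Mom 0 F = a \<and> Mom 1 F = b \<and> Mom 2 F = c)"

lemma Mom_nth: "Mom r F $ j = mom r (F $ j)" by (simp add: Mom_def)

lemma FS_mult: "FS F \<Longrightarrow> FS G \<Longrightarrow> FS (F * G)"
  unfolding FS_def fps_mult_nth by (auto intro!: fs_sum mom_mult_gen(1))

lemma Mom_mult_nth: "FS F \<Longrightarrow> FS G \<Longrightarrow>
  mom r ((F * G) $ j) = (\<Sum>i=0..j. mom r (F $ i * G $ (j - i)))"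
  unfolding FS_def fps_mult_nth by (rule mom_sum) (auto intro!: mom_mult_gen(1))

lemma phi_mult:
  assumes "phi F a b c" "phi G a' b' c'"
  shows "phi (F * G) (a * a') (a * b' + b * a') (c * a' + (b * b' + b * b') + a * c')"
proof -
  have F: "FS F" and G: "FS G" using assms by (auto simp: phi_def)
  have fsF: "fs (F $ i)" for i using F by (simp add: FS_def)
  have fsG: "fs (G $ i)" for i using G by (simp add: FS_def)
  have M: "Mom 0 F = a" "Mom 1 F = b" "Mom 2 F = c" "Mom 0 G = a'" "Mom 1 G = b'" "Mom 2 G = c'"
    using assms by (auto simp: phi_def)
  have "Mom 0 (F * G) = a * a'"
  proof (rule fps_ext)
    fix j show "Mom 0 (F * G) $ j = (a * a') $ j"
      unfolding Mom_nth Mom_mult_nth[OF F G] unfolding fps_mult_nth M[symmetric] Mom_nth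
      by (simp add: mom0_mult fsF fsG)
  qed
  moreover have "Mom 1 (F * G) = a * b' + b * a'"
  proof (rule fps_ext)
    fix j show "Mom 1 (F * G) $ j = (a * b' + b * a') $ j"
      unfolding Mom_nth Mom_mult_nth[OF F G] unfolding fps_mult_nth M[symmetric] fps_add_nth Mom_nth
      unfolding mom1_mult[OF fsF fsG] by (simp add: sum.distrib algebra_simps)
  qed
  moreover have "Mom 2 (F * G) = c * a' + (b * b' + b * b') + a * c'"
  proof (rule fps_ext)
    fix j show "Mom 2 (F * G) $ j = (c * a' + (b * b' + b * b') + a * c') $ j"
      unfolding Mom_nth Mom_mult_nth[OF F G] unfolding fps_mult_nth M[symmetric] fps_add_nth Mom_nth
      unfolding mom2_mult[OF fsF fsG] by (simp add: sum.distrib sum_distrib_left algebra_simps)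
  qed
  ultimately show ?thesis using FS_mult[OF F G] by (simp add: phi_def)
qed

lemma Mom_add: "FS F \<Longrightarrow> FS G \<Longrightarrow> Mom r (F + G) = Mom r F + Mom r G"
  by (rule fps_ext) (simp add: Mom_nth mom_add FS_def)

lemma Mom_uminus: "Mom r (- F) = - Mom r F"
  by (rule fps_ext) (simp add: Mom_nth mom_uminus)

lemma phi_add:
  assumes "phi F a b c" "phi G a' b' c'"
  shows "phi (F + G) (a + a') (b + b') (c + c')"
proof -
  have fsF: "fs (F $ i)" for i using assms by (simp add: FS_def phi_def)
  have fsG: "fs (G $ i)" for i using assms by (simp add: FS_def phi_def)
  show ?thesis using assms unfolding phi_def
    by (auto simp: Mom_add FS_def fsF fsG intro: fs_add)
qed

lemma phi_uminus:
  assumes "phi F a b c"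
  shows "phi (- F) (- a) (- b) (- c)"
proof -
  have fsF: "fs (F $ i)" for i using assms by (simp add: FS_def phi_def)
  show ?thesis using assms unfolding phi_def
    by (auto simp: Mom_uminus FS_def fsF intro: fs_uminus)
qed

lemma phi_diff:
  assumes "phi F a b c" "phi G a' b' c'"
  shows "phi (F - G) (a - a') (b - b') (c - c')"
  using phi_add[OF assms(1) phi_uminus[OF assms(2)]] by simp

lemma phi_cong: "phi F a b c \<Longrightarrow> a = a' \<Longrightarrow> b = b' \<Longrightarrow> c = c' \<Longrightarrow> phi F a' b' c'"
  by simp

lemma phi_unique: "phi F a b c \<Longrightarrow> phi F a' b' c' \<Longrightarrow> a = a' \<and> b = b' \<and> c = c'"
  by (simp add: phi_def)

lemma mom_if: "mom r (if P then x else 0) = (if P then mom r x else 0)"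
  by (simp add: mom_zero)

lemma phi_one: "phi 1 1 0 0"
  unfolding phi_def FS_def
  by (auto intro!: fps_ext simp: Mom_nth mom_one mom_zero fs_one fs_zero)

lemma phi_X: "phi qv fps_X 0 0"
  unfolding phi_def FS_def qv_def
  by (auto intro!: fps_ext simp: Mom_nth mom_one mom_zero fs_one fs_zero)

lemma phi_zv: "phi zv 1 1 1"
  unfolding phi_def FS_def zv_def
  by (auto intro!: fps_ext simp: Mom_nth mom_X mom_zero fs_X fs_zero)

lemma phi_zinv: "phi zinv 1 (-1) 1"
  unfolding phi_def FS_def zinv_def
  by (auto intro!: fps_ext simp: Mom_nth mom_Xinv mom_zero fs_Xinv fs_zero)

lemma phi_pow: "phi F a 0 0 \<Longrightarrow> phi (F ^ m) (a ^ m) 0 0"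
proof (induction m)
  case 0
  then show ?case using phi_one by simp
next
  case (Suc m)
  have IH: "phi (F ^ m) (a ^ m) 0 0" using Suc by simp
  show ?case using phi_mult[OF Suc.prems IH] by simp
qed

lemma phi_prod: "finite I \<Longrightarrow> (\<And>i. i \<in> I \<Longrightarrow> phi (F i) (a i) 0 0) \<Longrightarrow>
  phi (\<Prod>i\<in>I. F i) (\<Prod>i\<in>I. a i) 0 0"
proof (induction I rule: finite_induct)
  case empty
  then show ?case using phi_one by simp
next
  case (insert x I)
  show ?case using phi_mult[OF insert.prems[of x] insert.IH] insert by simp
qed

lemma FS_quot:
  fixes G F H :: ser
  assumes eq: "G * F = H" and F: "FS F" and H: "FS H" and F0: "F $ 0 = 1"
  shows "FS G"
  unfolding FS_def
proof
  fix j show "fs (G $ j)"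
  proof (induction j rule: less_induct)
    case (less j)
    have "H $ j = (\<Sum>i=0..j. G $ i * F $ (j - i))" by (simp only: eq[symmetric] fps_mult_nth)
    also have "\<dots> = G $ j * F $ 0 + (\<Sum>i\<in>{0..<j}. G $ i * F $ (j - i))"
      by (simp add: atLeast0AtMost atLeast0LessThan lessThan_Suc_atMost[symmetric] sum.lessThan_Suc)
    finally have "G $ j = H $ j - (\<Sum>i\<in>{0..<j}. G $ i * F $ (j - i))" using F0 by simp
    moreover have "fs (\<Sum>i\<in>{0..<j}. G $ i * F $ (j - i))"
      using less F by (auto intro!: fs_sum mom_mult_gen(1) simp: FS_def)
    ultimately show ?case using H by (simp add: FS_def fs_diff)
  qed
qed

definition eqto :: "nat \<Rightarrow> 'a::zero fps \<Rightarrow> 'a fps \<Rightarrow> bool" where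
  "eqto d F G = (\<forall>j\<le>d. F $ j = G $ j)"

lemma eqto_refl: "eqto d F F" by (simp add: eqto_def)
lemma eqto_sym: "eqto d F G \<Longrightarrow> eqto d G F" by (simp add: eqto_def)
lemma eqto_trans: "eqto d F G \<Longrightarrow> eqto d G H \<Longrightarrow> eqto d F H" by (simp add: eqto_def)

lemma eqto_mult:
  fixes F G H K :: "'a::comm_ring_1 fps"
  assumes "eqto d F G" "eqto d H K"
  shows "eqto d (F * H) (G * K)"
  unfolding eqto_def
proof (intro allI impI)
  fix j assume j: "j \<le> d"
  show "(F * H) $ j = (G * K) $ j" unfolding fps_mult_nth
    by (rule sum.cong) (use assms j in \<open>auto simp: eqto_def\<close>)
qed

lemma eqto_inverse:
  fixes F G :: "'a::field fps"
  assumes e: "eqto d F G" and F0: "F $ 0 \<noteq> 0"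
  shows "eqto d (inverse F) (inverse G)"
proof -
  have G0: "G $ 0 \<noteq> 0" using e F0 by (simp add: eqto_def)
  define u where "u = inverse F"
  define v where "v = inverse G"
  have uF: "u * F = 1" unfolding u_def using F0 by (rule inverse_mult_eq_1)
  have vG: "G * v = 1" unfolding v_def using G0 by (rule inverse_mult_eq_1')
  have "eqto d (u * F) (u * G)" by (rule eqto_mult[OF eqto_refl e])
  then have "eqto d 1 (u * G)" using uF by simp
  then have "eqto d (1 * v) (u * G * v)" by (rule eqto_mult[OF _ eqto_refl])
  then have "eqto d v u" using vG by (simp add: mult.assoc)
  then show ?thesis unfolding u_def v_def by (rule eqto_sym)
qed

lemma eqto_divide:
  fixes A A' B B' :: "'a::field fps"
  assumes "eqto d A A'" "eqto d B B'" "B $ 0 \<noteq> 0"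
  shows "eqto d (A / B) (A' / B')"
proof -
  have "B' $ 0 \<noteq> 0" using assms by (simp add: eqto_def)
  then show ?thesis using assms
    by (simp add: fps_divide_unit eqto_mult eqto_inverse)
qed

lemma small_coeff:
  fixes a b :: "'a::comm_ring_1 fps"
  assumes a0: "a $ 0 = 0" and b0: "b $ 0 = 0"
  shows "t \<le> i \<Longrightarrow> (a * b ^ i) $ t = 0"
proof (induction i arbitrary: t)
  case 0
  then show ?case using a0 by simp
next
  case (Suc i)
  have "(a * b ^ Suc i) $ t = ((a * b ^ i) * b) $ t" by (simp add: mult_ac)
  also have "\<dots> = (\<Sum>s=0..t. (a * b ^ i) $ s * b $ (t - s))" by (rule fps_mult_nth)
  also have "\<dots> = 0"
  proof (rule sum.neutral, rule ballI)
    fix s assume s: "s \<in> {0..t}"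
    show "(a * b ^ i) $ s * b $ (t - s) = 0"
    proof (cases "s = t")
      case True
      then show ?thesis using b0 by simp
    next
      case False
      then have "s \<le> i" using s Suc.prems by auto
      then show ?thesis using Suc.IH by simp
    qed
  qed
  finally show ?case .
qed

lemma mult_stable:
  fixes P F :: "'a::comm_ring_1 fps"
  assumes F0: "F $ 0 = 1" and Ft: "\<And>t. 0 < t \<Longrightarrow> t \<le> d \<Longrightarrow> F $ t = 0" and j: "j \<le> d"
  shows "(P * F) $ j = P $ j"
proof -
  have "(P * F) $ j = (\<Sum>i=0..j. P $ i * F $ (j - i))" by (rule fps_mult_nth)
  also have "\<dots> = (\<Sum>i=0..j. if i = j then P $ j else 0)"
    by (rule sum.cong) (use F0 Ft j in auto)
  also have "\<dots> = P $ j" by simp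
  finally show ?thesis .
qed

lemma qpoch_nth:
  fixes a b :: ser
  assumes a0: "a $ 0 = 0" and b0: "b $ 0 = 0" and j: "j \<le> n"
  shows "qpoch a b $ j = (\<Prod>i\<le>n. 1 - a * b ^ i) $ j"
proof -
  define f where "f = (\<lambda>i. 1 - a * b ^ i)"
  define P where "P = (\<lambda>n. \<Prod>i\<le>n. f i)"
  have f0: "f i $ 0 = 1" for i unfolding f_def using small_coeff[OF a0 b0, of 0 i] by simp
  have ft: "0 < t \<Longrightarrow> t \<le> i \<Longrightarrow> f i $ t = 0" for t i
    unfolding f_def using small_coeff[OF a0 b0, of t i] by simp
  have stab: "j \<le> n \<Longrightarrow> P n $ j = P j $ j" for j n
  proof (induction n)
    case 0
    then show ?case by simp
  next
    case (Suc n)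
    show ?case
    proof (cases "j = Suc n")
      case True
      then show ?thesis by simp
    next
      case False
      then have jn: "j \<le> n" using Suc.prems by simp
      have "P (Suc n) $ j = (P n * f (Suc n)) $ j" by (simp add: P_def prod.atMost_Suc)
      also have "\<dots> = P n $ j" by (rule mult_stable[OF f0 ft]) (use Suc.prems in auto)
      finally show ?thesis using Suc.IH[OF jn] by simp
    qed
  qed
  define g where "g = Abs_fps (\<lambda>j. P j $ j)"
  have lim: "(\<lambda>n. \<Prod>i\<le>n. f (i + 0)) \<longlonglongrightarrow> g"
  proof (rule tendsto_fpsI)
    fix j
    show "\<forall>\<^sub>F n in sequentially. (\<Prod>i\<le>n. f (i + 0)) $ j = g $ j"
      unfolding eventually_at_top_linorder
    proof (intro exI[of _ j] allI impI)
      fix n assume jn: "j \<le> n"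
      have "(\<Prod>i\<le>n. f (i + 0)) = P n" by (simp add: P_def)
      then show "(\<Prod>i\<le>n. f (i + 0)) $ j = g $ j" using stab[OF jn] by (simp add: g_def)
    qed
  qed
  have "g $ 0 = 1" by (simp add: g_def P_def f0)
  then have "g \<noteq> 0" by auto
  with lim have "raw_has_prod f 0 g" by (simp add: raw_has_prod_def)
  then have "f has_prod g" by (simp add: has_prod_def)
  then have "prodinf f = g" by (rule has_prod_unique[symmetric])
  then have "qpoch a b = g" by (simp add: qpoch_def f_def)
  then show ?thesis using stab[OF j] by (simp add: g_def P_def f_def)
qed

lemma prod_nth0:
  fixes F :: "'b \<Rightarrow> 'a::comm_ring_1 fps"
  shows "(\<Prod>i\<in>I. F i) $ 0 = (\<Prod>i\<in>I. F i $ 0)"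
  by (induction I rule: infinite_finite_induct) auto

definition D :: "nat \<Rightarrow> real fps" where
  "D m = Abs_fps (\<lambda>t. if m dvd t then real (t div m) else 0)"

definition Geo2 :: "nat \<Rightarrow> real fps" where
  "Geo2 s = Abs_fps (\<lambda>t. if 0 < t \<and> s dvd t then 1 else 0)"

lemma Geo2_eq: assumes "0 < s" shows "Geo2 s * (1 - fps_X ^ s) = fps_X ^ s"
proof (rule fps_ext)
  fix t
  show "(Geo2 s * (1 - fps_X ^ s)) $ t = (fps_X ^ s :: real fps) $ t"
  proof (cases "t < s")
    case True
    then have "\<not> (0 < t \<and> s dvd t)" by (auto dest: dvd_imp_le)
    then show ?thesis using True by (simp add: ring_distribs fps_X_power_mult_right_nth Geo2_def)
  next
    case False
    then show ?thesis using assms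
      by (cases "t = s") (auto simp: ring_distribs fps_X_power_mult_right_nth Geo2_def dvd_minus_self)
  qed
qed

lemma D_Geo2: assumes m: "0 < m" shows "D m * (1 - fps_X ^ m) = Geo2 m"
proof (rule fps_ext)
  fix t
  show "(D m * (1 - fps_X ^ m)) $ t = Geo2 m $ t"
  proof (cases "t < m")
    case True
    then have "m dvd t \<longleftrightarrow> t = 0" using m by (auto dest: dvd_imp_le)
    then show ?thesis using True by (auto simp: ring_distribs fps_X_power_mult_right_nth Geo2_def D_def)
  next
    case False
    then have tm: "m \<le> t" by simp
    show ?thesis
    proof (cases "m dvd t")
      case True
      then obtain c where c: "t = m * c" by blast
      then have "0 < c" using tm m by (cases c) auto
      have "t - m = m * (c - 1)" using c by (simp add: right_diff_distrib')
      then have e: "(t - m) div m = c - 1" "t div m = c" using c m by simp_all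
      have dv: "m dvd (t - m)" using \<open>t - m = m * (c - 1)\<close> by simp
      have "0 < t" using tm m by simp
      then show ?thesis using True tm e dv \<open>0 < c\<close>
        by (simp add: ring_distribs fps_X_power_mult_right_nth Geo2_def D_def of_nat_diff)
    next
      case False
      have "\<not> m dvd (t - m)"
      proof
        assume "m dvd (t - m)"
        then have "m dvd (t - m + m)" by simp
        then show False using False tm by simp
      qed
      then show ?thesis using False tm by (simp add: ring_distribs fps_X_power_mult_right_nth Geo2_def D_def)
    qed
  qed
qed

lemma D_eq: assumes "0 < m" shows "D m * (1 - fps_X ^ m) ^ 2 = fps_X ^ m"
proof -
  have "D m * (1 - fps_X ^ m) ^ 2 = (D m * (1 - fps_X ^ m)) * (1 - fps_X ^ m)"
    by (simp add: power2_eq_square mult.assoc)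
  also have "\<dots> = fps_X ^ m" using D_Geo2[OF assms] Geo2_eq[OF assms] by simp
  finally show ?thesis .
qed

lemma div_div_nat: "0 < u \<Longrightarrow> (d::nat) dvd u \<Longrightarrow> u div (u div d) = d"
proof -
  assume u: "0 < u" and d: "d dvd u"
  then obtain c where c: "u = d * c" by blast
  then have "0 < d" "0 < c" using u by auto
  then show ?thesis using c by simp
qed

lemma div_in_divisors: "0 < u \<Longrightarrow> (a::nat) dvd u \<Longrightarrow> u div a dvd u"
proof -
  assume u: "0 < u" and a: "a dvd u"
  then obtain c where c: "u = a * c" by blast
  then have "0 < a" using u by (cases a) auto
  then have "u div a = c" using c by simp
  then show "u div a dvd u" using c by simp
qed

lemma divisor_sum_swap:
  assumes u: "0 < u"
  shows "(\<Sum>d\<in>{d. d dvd u}. real d) = (\<Sum>d\<in>{d. d dvd u}. real (u div d))"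
  by (rule sum.reindex_bij_witness[where i = "\<lambda>d. u div d" and j = "\<lambda>d. u div d"])
     (auto simp: div_div_nat[OF u] div_in_divisors[OF u])

lemma sum_divisors_shift:
  assumes u: "0 < u" and un: "u \<le> Suc n"
  shows "(\<Sum>j\<le>n. if Suc j dvd u then g (Suc j) else 0) = (\<Sum>d\<in>{d. d dvd u}. g d)"
proof -
  have "(\<Sum>j\<le>n. if Suc j dvd u then g (Suc j) else 0) = (\<Sum>d\<in>Suc ` {..n}. if d dvd u then g d else 0)"
    by (subst sum.reindex) auto
  also have "\<dots> = (\<Sum>d\<in>{1..Suc n}. if d dvd u then g d else 0)" by (simp add: image_Suc_atMost)
  also have "\<dots> = (\<Sum>d\<in>{d \<in> {1..Suc n}. d dvd u}. g d)" by (rule sum.inter_filter[symmetric]) simp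
  also have "{d \<in> {1..Suc n}. d dvd u} = {d. d dvd u}"
  proof (intro set_eqI iffI)
    fix d assume "d \<in> {d. d dvd u}"
    then have "d dvd u" by simp
    then have "d \<le> u" "0 < d" using u by (auto dest: dvd_imp_le intro: Nat.gr0I)
    then show "d \<in> {d \<in> {1..Suc n}. d dvd u}" using un \<open>d dvd u\<close> by auto
  qed auto
  finally show ?thesis .
qed

lemma lambert:
  assumes k: "1 \<le> k" and t: "t \<le> n"
  shows "(\<Sum>j\<le>n. fps_const (real (j + 1)) * Geo2 (k * (j + 1))) $ t = (\<Sum>j\<le>n. D (k * (j + 1))) $ t"
proof -
  have L: "(\<Sum>j\<le>n. fps_const (real (j + 1)) * Geo2 (k * (j + 1))) $ t =
        (\<Sum>j\<le>n. if 0 < t \<and> k * (j + 1) dvd t then real (j + 1) else 0)"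
    by (auto simp: fps_sum_nth Geo2_def intro!: sum.cong)
  have R: "(\<Sum>j\<le>n. D (k * (j + 1))) $ t = (\<Sum>j\<le>n. if k * (j + 1) dvd t then real (t div (k * (j + 1))) else 0)"
    by (simp only: fps_sum_nth D_def fps_nth_Abs_fps)
  show ?thesis
  proof (cases "0 < t \<and> k dvd t")
    case False
    have kd: "k dvd t" if "k + k * j dvd t" for j
    proof -
      have "k * (j + 1) dvd t" using that by (simp add: algebra_simps)
      then show ?thesis by (rule dvd_mult_left)
    qed
    have "(\<Sum>j\<le>n. if 0 < t \<and> k * (j + 1) dvd t then real (j + 1) else 0) = 0"
      using False by (auto intro!: sum.neutral dest: kd)
    moreover have "(\<Sum>j\<le>n. if k * (j + 1) dvd t then real (t div (k * (j + 1))) else 0) = 0"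
      using False by (auto intro!: sum.neutral dest: kd)
    ultimately show ?thesis using L R by simp
  next
    case True
    then obtain u where u: "t = k * u" by blast
    then have u0: "0 < u" using True by (cases u) auto
    have uSn: "u \<le> Suc n" using u k t by (metis le_SucI mult_le_mono1 mult_1 order_trans)
    have dvd_iff: "k * (j + 1) dvd t \<longleftrightarrow> Suc j dvd u" for j
      using u k nat_mult_dvd_cancel1[of k "Suc j" u] by simp
    have div_eq: "t div (k * (j + 1)) = u div Suc j" for j
      using u k div_mult_mult1_if[of k u "Suc j"] by simp
    have "(\<Sum>j\<le>n. if 0 < t \<and> k * (j + 1) dvd t then real (j + 1) else 0) =
          (\<Sum>j\<le>n. if Suc j dvd u then real (Suc j) else 0)"
      using True dvd_iff by (auto intro!: sum.cong)
    also have "\<dots> = (\<Sum>d\<in>{d. d dvd u}. real d)" by (rule sum_divisors_shift[OF u0 uSn])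
    also have "\<dots> = (\<Sum>d\<in>{d. d dvd u}. real (u div d))" by (rule divisor_sum_swap[OF u0])
    also have "\<dots> = (\<Sum>j\<le>n. if Suc j dvd u then real (u div Suc j) else 0)"
      by (rule sum_divisors_shift[OF u0 uSn, symmetric])
    also have "\<dots> = (\<Sum>j\<le>n. if k * (j + 1) dvd t then real (t div (k * (j + 1))) else 0)"
      using dvd_iff div_eq by (auto intro!: sum.cong)
    finally show ?thesis using L R by simp
  qed
qed

lemma fac0:
  fixes a b :: ser
  shows "a $ 0 = 0 \<Longrightarrow> b $ 0 = 0 \<Longrightarrow> (1 - a * b ^ i) $ 0 = 1"
  using small_coeff[of a b 0 i] by simp

lemma prodfac0:
  fixes a b :: ser
  shows "a $ 0 = 0 \<Longrightarrow> b $ 0 = 0 \<Longrightarrow> (\<Prod>i\<le>n. 1 - a * b ^ i) $ 0 = 1"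
  by (simp add: prod_nth0 fac0)

lemma eqto_qpoch:
  fixes a b :: ser
  shows "a $ 0 = 0 \<Longrightarrow> b $ 0 = 0 \<Longrightarrow> eqto n (qpoch a b) (\<Prod>i\<le>n. 1 - a * b ^ i)"
  unfolding eqto_def using qpoch_nth by blast

definition EN :: "nat \<Rightarrow> nat \<Rightarrow> ser" where "EN k n = (\<Prod>i\<le>n. 1 - qv ^ k * (qv ^ k) ^ i)"
definition PMN :: "nat \<Rightarrow> ser" where "PMN n = (\<Prod>i\<le>n. 1 - (- qv) * qv ^ i)"
definition PPN :: "nat \<Rightarrow> ser" where "PPN n = (\<Prod>i\<le>n. 1 - qv * qv ^ i)"
definition Z1N :: "nat \<Rightarrow> nat \<Rightarrow> ser" where "Z1N k n = (\<Prod>i\<le>n. 1 - zv * qv ^ k * (qv ^ k) ^ i)"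
definition Z2N :: "nat \<Rightarrow> nat \<Rightarrow> ser" where "Z2N k n = (\<Prod>i\<le>n. 1 - qv ^ k * zinv * (qv ^ k) ^ i)"
definition GN :: "nat \<Rightarrow> nat \<Rightarrow> ser" where
  "GN k n = EN k n * (PMN n / PPN n) * (EN k n / (Z1N k n * Z2N k n))"

lemma zero_facts:
  assumes k: "1 \<le> k"
  shows "(qv ^ k :: ser) $ 0 = 0" "(qv :: ser) $ 0 = 0" "(- qv :: ser) $ 0 = 0"
    "(zv * qv ^ k :: ser) $ 0 = 0" "(qv ^ k * zinv :: ser) $ 0 = 0"
  using k by (simp_all add: qv_def)

lemma N0:
  assumes k: "1 \<le> k"
  shows "EN k n $ 0 = 1" "PMN n $ 0 = 1" "PPN n $ 0 = 1" "Z1N k n $ 0 = 1" "Z2N k n $ 0 = 1"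
  unfolding EN_def PMN_def PPN_def Z1N_def Z2N_def
  using zero_facts[OF k] by (simp_all only: prodfac0)

lemma GF_eqto:
  assumes k: "1 \<le> k"
  shows "eqto n (GF k) (GN k n)"
proof -
  note z = zero_facts[OF k]
  have a1: "eqto n (qpoch (qv ^ k) (qv ^ k)) (EN k n)" unfolding EN_def by (rule eqto_qpoch[OF z(1) z(1)])
  have a2: "eqto n (qpoch (- qv) qv) (PMN n)" unfolding PMN_def by (rule eqto_qpoch[OF z(3) z(2)])
  have a3: "eqto n (qpoch qv qv) (PPN n)" unfolding PPN_def by (rule eqto_qpoch[OF z(2) z(2)])
  have a4: "eqto n (qpoch (zv * qv ^ k) (qv ^ k)) (Z1N k n)" unfolding Z1N_def by (rule eqto_qpoch[OF z(4) z(1)])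
  have a5: "eqto n (qpoch (qv ^ k * zinv) (qv ^ k)) (Z2N k n)" unfolding Z2N_def by (rule eqto_qpoch[OF z(5) z(1)])
  have d3: "qpoch qv qv $ 0 \<noteq> 0" using a3 N0[OF k] by (simp add: eqto_def)
  have a45: "eqto n (qpoch (zv * qv ^ k) (qv ^ k) * qpoch (qv ^ k * zinv) (qv ^ k)) (Z1N k n * Z2N k n)"
    by (rule eqto_mult[OF a4 a5])
  have "(qpoch (zv * qv ^ k) (qv ^ k) * qpoch (qv ^ k * zinv) (qv ^ k)) $ 0 = (Z1N k n * Z2N k n) $ 0"
    using a45 unfolding eqto_def by blast
  also have "\<dots> = 1" using N0[OF k] by simp
  finally have d45: "(qpoch (zv * qv ^ k) (qv ^ k) * qpoch (qv ^ k * zinv) (qv ^ k)) $ 0 \<noteq> 0" by simp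
  show ?thesis unfolding GF_def Pbar_def Cz_def GN_def
    by (intro eqto_mult a1 eqto_divide a2 a3 d3 a45 d45)
qed

lemma GN_mult:
  assumes k: "1 \<le> k"
  shows "GN k n * (PPN n * (Z1N k n * Z2N k n)) = EN k n * PMN n * EN k n"
proof -
  note N = N0[OF k]
  have z12: "(Z1N k n * Z2N k n) $ 0 \<noteq> 0" using N by simp
  have p: "PPN n $ 0 \<noteq> 0" using N by simp
  have i1: "inverse (PPN n) * PPN n = 1" by (rule inverse_mult_eq_1[OF p])
  have i2: "inverse (Z1N k n * Z2N k n) * (Z1N k n * Z2N k n) = 1" by (rule inverse_mult_eq_1[OF z12])
  have "GN k n * (PPN n * (Z1N k n * Z2N k n)) =
        EN k n * PMN n * EN k n * (inverse (PPN n) * PPN n) * (inverse (Z1N k n * Z2N k n) * (Z1N k n * Z2N k n))"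
    unfolding GN_def fps_divide_unit[OF p] fps_divide_unit[OF z12] by (simp only: mult_ac)
  also have "\<dots> = EN k n * PMN n * EN k n" by (simp only: i1 i2 mult_1_right)
  finally show ?thesis .
qed

definition yv :: "nat \<Rightarrow> nat \<Rightarrow> real fps" where "yv k i = fps_X ^ k * (fps_X ^ k) ^ i"

lemma phi_qvk: "phi (qv ^ k) (fps_X ^ k) 0 0"
  using phi_pow[OF phi_X] by simp

lemma phi_Efac: "phi (1 - qv ^ k * (qv ^ k) ^ i) (1 - yv k i) 0 0"
  using phi_diff[OF phi_one phi_mult[OF phi_qvk phi_pow[OF phi_qvk]]] by (simp add: yv_def)

lemma phi_EN: "phi (EN k n) (\<Prod>i\<le>n. (1 - yv k i)) 0 0"
  unfolding EN_def by (rule phi_prod) (auto intro: phi_Efac)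

lemma phi_PM: "phi (PMN n) (\<Prod>i\<le>n. (1 + fps_X * fps_X ^ i)) 0 0"
proof -
  have "phi (1 - (- qv) * qv ^ i) (1 + fps_X * fps_X ^ i) 0 0" for i
    using phi_diff[OF phi_one phi_mult[OF phi_uminus[OF phi_X] phi_pow[OF phi_X]]] by simp
  then show ?thesis unfolding PMN_def by (intro phi_prod) auto
qed

lemma phi_PP: "phi (PPN n) (\<Prod>i\<le>n. (1 - fps_X * fps_X ^ i)) 0 0"
proof -
  have "phi (1 - qv * qv ^ i) (1 - fps_X * fps_X ^ i) 0 0" for i
    using phi_diff[OF phi_one phi_mult[OF phi_X phi_pow[OF phi_X]]] by simp
  then show ?thesis unfolding PPN_def by (intro phi_prod) auto
qed

lemma phi_Z1fac: "phi (1 - zv * qv ^ k * (qv ^ k) ^ i) (1 - yv k i) (- yv k i) (- yv k i)"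
  using phi_diff[OF phi_one phi_mult[OF phi_mult[OF phi_zv phi_qvk] phi_pow[OF phi_qvk]]]
  by (simp add: yv_def)

lemma phi_Z2fac: "phi (1 - qv ^ k * zinv * (qv ^ k) ^ i) (1 - yv k i) (yv k i) (- yv k i)"
  using phi_diff[OF phi_one phi_mult[OF phi_mult[OF phi_qvk phi_zinv] phi_pow[OF phi_qvk]]]
  by (simp add: yv_def)

lemma phi_W: "phi ((1 - zv * qv ^ k * (qv ^ k) ^ i) * (1 - qv ^ k * zinv * (qv ^ k) ^ i))
                ((1 - yv k i) ^ 2) 0 (- 2 * yv k i)"
  using phi_mult[OF phi_Z1fac phi_Z2fac] by (rule phi_cong) (simp_all add: power2_eq_square algebra_simps)

lemma yv_eq: "yv k i = fps_X ^ (k * (i + 1))"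
  by (simp add: yv_def power_mult[symmetric] power_add[symmetric] algebra_simps)

lemma D_yv: "1 \<le> k \<Longrightarrow> D (k * (i + 1)) * (1 - yv k i) ^ 2 = yv k i"
  unfolding yv_eq by (rule D_eq) simp

lemma phi_ZZ:
  assumes k: "1 \<le> k"
  shows "phi (\<Prod>i\<le>m. (1 - zv * qv ^ k * (qv ^ k) ^ i) * (1 - qv ^ k * zinv * (qv ^ k) ^ i))
           (\<Prod>i\<le>m. (1 - yv k i) ^ 2) 0
           (- 2 * (\<Prod>i\<le>m. (1 - yv k i) ^ 2) * (\<Sum>i\<le>m. D (k * (i + 1))))"
proof (induction m)
  case 0
  have "phi ((1 - zv * qv ^ k * (qv ^ k) ^ 0) * (1 - qv ^ k * zinv * (qv ^ k) ^ 0))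
      ((1 - yv k 0) ^ 2) 0 (- 2 * ((1 - yv k 0) ^ 2) * D (k * (0 + 1)))"
    using phi_W[of k 0]
  proof (rule phi_cong)
    have "- 2 * ((1 - yv k 0) ^ 2) * D (k * (0 + 1)) = - 2 * (D (k * (0 + 1)) * (1 - yv k 0) ^ 2)"
      by (simp only: mult_ac)
    also have "\<dots> = - 2 * yv k 0" by (simp only: D_yv[OF k, of 0])
    finally show "- 2 * yv k 0 = - 2 * ((1 - yv k 0) ^ 2) * D (k * (0 + 1))" by simp
  qed simp_all
  then show ?case by simp
next
  case (Suc m)
  define A where "A = (\<Prod>i\<le>m. (1 - yv k i) ^ 2)"
  define T where "T = (\<Sum>i\<le>m. D (k * (i + 1)))"
  define a where "a = (1 - yv k (Suc m)) ^ 2"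
  define d where "d = D (k * (Suc m + 1))"
  have da: "d * a = yv k (Suc m)" unfolding d_def a_def by (rule D_yv[OF k])
  have "phi ((\<Prod>i\<le>m. (1 - zv * qv ^ k * (qv ^ k) ^ i) * (1 - qv ^ k * zinv * (qv ^ k) ^ i)) *
            ((1 - zv * qv ^ k * (qv ^ k) ^ Suc m) * (1 - qv ^ k * zinv * (qv ^ k) ^ Suc m)))
          (A * a) 0 (- 2 * (A * a) * (T + d))"
    using phi_mult[OF Suc.IH phi_W[of k "Suc m"]]
  proof (rule phi_cong)
    show "- 2 * (\<Prod>i\<le>m. (1 - yv k i)\<^sup>2) * (\<Sum>i\<le>m. D (k * (i + 1))) * (1 - yv k (Suc m))\<^sup>2 +
          (0 * 0 + 0 * 0) + (\<Prod>i\<le>m. (1 - yv k i)\<^sup>2) * (- 2 * yv k (Suc m)) = - 2 * (A * a) * (T + d)"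
      unfolding A_def[symmetric] T_def[symmetric] a_def[symmetric] unfolding da[symmetric]
      by (simp add: algebra_simps)
  qed (simp_all add: A_def a_def)
  then show ?case by (simp add: prod.atMost_Suc sum.atMost_Suc A_def T_def a_def d_def)
qed

lemma Z1Z2: "Z1N k n * Z2N k n =
  (\<Prod>i\<le>n. (1 - zv * qv ^ k * (qv ^ k) ^ i) * (1 - qv ^ k * zinv * (qv ^ k) ^ i))"
  unfolding Z1N_def Z2N_def by (rule prod.distrib[symmetric])

lemma infsum_mom2: "fs f \<Longrightarrow> (\<Sum>\<^sub>\<infinity>m\<in>(UNIV::int set). (of_int m) ^ 2 * f $$ m) = mom 2 f"
proof -
  assume f: "fs f"
  have "(\<Sum>\<^sub>\<infinity>m\<in>(UNIV::int set). (of_int m) ^ 2 * f $$ m) = (\<Sum>\<^sub>\<infinity>m\<in>supp f. (of_int m) ^ 2 * f $$ m)"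
    by (rule infsum_cong_neutral) (auto simp: supp_def)
  also have "\<dots> = (\<Sum>m\<in>supp f. (of_int m) ^ 2 * f $$ m)" using f by (simp add: fs_def)
  finally show ?thesis by (simp add: mom_def)
qed

lemma prod_real0:
  assumes "1 \<le> k"
  shows "(\<Prod>i\<le>n. (1 - yv k i)) $ 0 = 1" "(\<Prod>i\<le>n. (1 - fps_X * fps_X ^ i) :: real fps) $ 0 = 1"
  using assms by (simp_all add: prod_nth0 yv_def)

lemma nz_of_0: "(F :: real fps) $ 0 = 1 \<Longrightarrow> F \<noteq> 0"
  by auto

lemma main_alg:
  assumes k: "1 \<le> k"
  shows "\<exists>g0. g0 * (\<Prod>i\<le>n. (1 - fps_X * fps_X ^ i)) = (\<Prod>i\<le>n. (1 + fps_X * fps_X ^ i)) \<and>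
             Mbar2 k n = 2 * (g0 * (\<Sum>j\<le>n. D (k * (j + 1)))) $ n"
proof -
  define G where "G = GN k n"
  define H where "H = PPN n * (Z1N k n * Z2N k n)"
  define R where "R = EN k n * PMN n * EN k n"
  define pp where "pp = (\<Prod>i\<le>n. (1 - fps_X * fps_X ^ i) :: real fps)"
  define pm where "pm = (\<Prod>i\<le>n. (1 + fps_X * fps_X ^ i) :: real fps)"
  define e where "e = (\<Prod>i\<le>n. (1 - yv k i))"
  define A where "A = (\<Prod>i\<le>n. (1 - yv k i) ^ 2)"
  define T where "T = (\<Sum>j\<le>n. D (k * (j + 1)))"
  have GH: "G * H = R" unfolding G_def H_def R_def by (rule GN_mult[OF k])
  have phiH: "phi H (pp * A) 0 (pp * (- 2 * A * T))"
    using phi_mult[OF phi_PP phi_ZZ[OF k, of n]] unfolding H_def Z1Z2[symmetric]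
    by (rule phi_cong) (simp_all add: pp_def A_def T_def)
  have phiR: "phi R (e * pm * e) 0 0"
    using phi_mult[OF phi_mult[OF phi_EN phi_PM] phi_EN] unfolding R_def
    by (rule phi_cong) (simp_all add: e_def pm_def)
  have FSH: "FS H" and FSR: "FS R" using phiH phiR by (simp_all add: phi_def)
  have H0: "H $ 0 = 1" unfolding H_def using N0[OF k] by simp
  have FSG: "FS G" by (rule FS_quot[OF GH FSH FSR H0])
  define g0 where "g0 = Mom 0 G"
  define g1 where "g1 = Mom 1 G"
  define g2 where "g2 = Mom 2 G"
  have phiG: "phi G g0 g1 g2" using FSG by (simp add: phi_def g0_def g1_def g2_def)
  have phiGH: "phi R (g0 * (pp * A)) (g0 * 0 + g1 * (pp * A))
                 (g2 * (pp * A) + (g1 * 0 + g1 * 0) + g0 * (pp * (- 2 * A * T)))"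
    using phi_mult[OF phiG phiH] unfolding GH .
  from phi_unique[OF phiGH phiR]
  have e1: "g0 * (pp * A) = e * pm * e" and e3: "g2 * (pp * A) + g0 * (pp * (- 2 * A * T)) = 0"
    by simp_all
  have Ae: "A = e * e" unfolding A_def e_def by (simp only: power2_eq_square prod.distrib)
  have enz: "e \<noteq> 0" unfolding e_def by (rule nz_of_0[OF prod_real0(1)[OF k]])
  have ppnz: "pp \<noteq> 0" unfolding pp_def by (rule nz_of_0[OF prod_real0(2)[OF k]])
  have "(g0 * pp) * (e * e) = pm * (e * e)" using e1 unfolding Ae by (simp add: mult_ac)
  then have g0pp: "g0 * pp = pm" using enz by simp
  have "(g2 - (g0 * T + g0 * T)) * (pp * A) = 0" using e3 by (simp add: algebra_simps)
  moreover have "pp * A \<noteq> 0" using ppnz enz Ae by simp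
  ultimately have g2eq: "g2 = g0 * T + g0 * T" by simp
  have GFn: "GF k $ n = G $ n" using GF_eqto[OF k, of n] unfolding G_def eqto_def by simp
  have fsn: "fs (G $ n)" using FSG by (simp add: FS_def)
  have "Mbar2 k n = mom 2 (G $ n)"
    unfolding Mbar2_def Mbar_def GFn using infsum_mom2[OF fsn] by simp
  also have "\<dots> = g2 $ n" by (simp add: g2_def Mom_nth)
  also have "\<dots> = 2 * (g0 * T) $ n" unfolding g2eq fps_add_nth by simp
  finally show ?thesis using g0pp unfolding pp_def pm_def T_def by blast
qed

lemma Geo_Geo2: "Geo = Geo2"
  by (rule ext) (simp add: Geo_def Geo2_def)

theorem mainTheorem2:
  fixes k n :: nat
  assumes "1 \<le> k"
  shows "real (nov k n) = real k / 2 * Mbar2 k n"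
proof -
  have k0: "0 < k" using assms by simp
  obtain g0 where g0: "g0 * (\<Prod>i\<le>n. (1 - fps_X * fps_X ^ i)) = (\<Prod>i\<le>n. (1 + fps_X * fps_X ^ i))"
    and M: "Mbar2 k n = 2 * (g0 * (\<Sum>j\<le>n. D (k * (j + 1)))) $ n"
    using main_alg[OF assms] by blast
  define pp where "pp = (\<Prod>i\<le>n. (1 - fps_X * fps_X ^ i) :: real fps)"
  define T where "T = (\<Sum>j\<le>n. D (k * (j + 1)))"
  define L where "L = (\<Sum>j\<le>n. fps_const (real (j + 1)) * Geo (k * (j + 1)))"
  have ppnz: "pp \<noteq> 0" unfolding pp_def by (rule nz_of_0) (simp add: prod_nth0)
  have "(g0 - OVL (Suc n)) * pp = 0"
    using g0 OVL_prod[of n] unfolding pp_def by (simp add: algebra_simps)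
  then have g0eq: "g0 = OVL (Suc n)" using ppnz by simp
  have sumeq: "(\<Sum>j\<le>n. fps_const (real (k * (j + 1))) * Geo (k * (j + 1))) = fps_const (real k) * L"
    unfolding L_def sum_distrib_left
  proof (rule sum.cong)
    fix j
    have "fps_const (real (k * (j + 1))) = fps_const (real k) * fps_const (real (j + 1))"
      by (simp add: algebra_simps)
    then show "fps_const (real (k * (j + 1))) * Geo (k * (j + 1)) =
               fps_const (real k) * (fps_const (real (j + 1)) * Geo (k * (j + 1)))"
      by (simp only: mult.assoc)
  qed simp
  have eL: "eqto n L T" unfolding eqto_def L_def T_def Geo_Geo2 using lambert[OF assms] by blast
  have eP: "eqto n PB (OVL (Suc n))" unfolding eqto_def using OVL_PB by simp
  have "real (nov k n) = (PB * (fps_const (real k) * L)) $ n"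
    using nov_fps[OF k0, of n] unfolding sumeq .
  also have "\<dots> = real k * (PB * L) $ n" by (simp add: mult.left_commute[of PB])
  also have "(PB * L) $ n = (OVL (Suc n) * T) $ n"
    using eqto_mult[OF eP eL] unfolding eqto_def by simp
  finally show ?thesis using M unfolding g0eq T_def by simp
qed

end
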